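(* Let $T_1,T_2$ be tables joined on column $J$, $T_1$ having a real-valued column $W$, let $\epsilon_1,\epsilon_2\in(0,1]$ and $p\in[\max\{\epsilon_1,\epsilon_2\},1]$. If $S_1=\mathrm{UBS}_{p,\epsilon_1/p}(T_1,J)$, $S_2=\mathrm{UBS}_{p,\epsilon_2/p}(T_2,J)$ and $\hat J_{\mathrm{sum}}=\frac{p}{\epsilon_1\epsilon_2}\sum_{(t_1,t_2)\in S_1\bowtie_J S_2}t_1.W$, then $$\mathrm{Var}[\hat J_{\mathrm{sum}}]=\Big(\frac1{\epsilon_2}-\frac1p\Big)\beta_1+\Big(\frac1{\epsilon_1}-\frac1p\Big)\beta_2+\Big(\frac{p}{\epsilon_1\epsilon_2}-\frac1{\epsilon_1}-\frac1{\epsilon_2}+\frac1p\Big)\beta_3+\Big(\frac1p-1\Big)\beta_4,$$ where $\beta_1=\sum_v a_v^2\mu_v^2b_v$, $\beta_2=\sum_v a_v(\mu_v^2+\sigma_v^2)b_v^2$, $\beta_3=\sum_v a_v(\mu_v^2+\sigma_v^2)b_v$, $\beta_4=\sum_v a_v^2\mu_v^2b_v^2$.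
   Context: $T_1,T_2$ are finite multisets of tuples with a join attribute $J$ taking values in a finite set $\mathcal U$; $a_v$ (resp. $b_v$) is the number of tuples of $T_1$ (resp. $T_2$) with $J$-value $v$. For each $v$ with $a_v>0$, $\mu_v$ and $\sigma_v^2$ are the mean and (population) variance of the $W$-values of the tuples of $T_1$ with $J$-value $v$; terms with $a_v=0$ contribute $0$. $X\bowtie_J Y$ is the set of pairs $(t_1,t_2)\in X\times Y$ with $t_1.J=t_2.J$. $\mathrm{UBS}_{p,q}(T,J)$: given a hash function $h:\mathcal U\to[0,1]$, each tuple $t\in T$ with $h(t.J)<p$ is included independently with probability $q$; others are excluded. The values $h(v)$ are independent uniform on $[0,1]$, the same $h$ is used for both tables, and the Bernoulli coins are independent across all tuples and independent of $h$. *)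

theory Defs
  imports "HOL-Probability.Probability"
begin

text \<open>Tables are modelled as finite sets of tuple identifiers (so multisets of
tuples are allowed); the join attribute J is a function from identifiers to
the finite value domain U, and W a real-valued function on T1's identifiers.\<close>

text \<open>Outcome of the randomness: hash values h (one per join value) and one
Bernoulli coin per tuple of T1 and of T2.\<close>

definition ubs_space ::
  "'u set \<Rightarrow> 'i set \<Rightarrow> 'k set \<Rightarrow> real \<Rightarrow> real
   \<Rightarrow> ((('u \<Rightarrow> real) \<times> ('i \<Rightarrow> bool)) \<times> ('k \<Rightarrow> bool)) measure" where
  "ubs_space U T1 T2 q1 q2 =
     ((PiM U (\<lambda>_. uniform_measure lborel {0..1::real}))
       \<Otimes>\<^sub>M (PiM T1 (\<lambda>_. measure_pmf (bernoulli_pmf q1))))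
       \<Otimes>\<^sub>M (PiM T2 (\<lambda>_. measure_pmf (bernoulli_pmf q2)))"

definition ubs_sample ::
  "real \<Rightarrow> ('u \<Rightarrow> real) \<Rightarrow> ('i \<Rightarrow> bool) \<Rightarrow> ('i \<Rightarrow> 'u) \<Rightarrow> 'i set \<Rightarrow> 'i set" where
  "ubs_sample p h c J T = {t \<in> T. h (J t) < p \<and> c t}"

definition join_on :: "('i \<Rightarrow> 'u) \<Rightarrow> ('k \<Rightarrow> 'u) \<Rightarrow> 'i set \<Rightarrow> 'k set \<Rightarrow> ('i \<times> 'k) set" where
  "join_on J1 J2 X Y = {(t1, t2) \<in> X \<times> Y. J1 t1 = J2 t2}"

definition J_sum_est ::
  "real \<Rightarrow> real \<Rightarrow> real \<Rightarrow> ('i \<Rightarrow> 'u) \<Rightarrow> ('k \<Rightarrow> 'u) \<Rightarrow> ('i \<Rightarrow> real) \<Rightarrow> 'i set \<Rightarrow> 'k set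
   \<Rightarrow> (('u \<Rightarrow> real) \<times> ('i \<Rightarrow> bool)) \<times> ('k \<Rightarrow> bool) \<Rightarrow> real" where
  "J_sum_est p e1 e2 J1 J2 W T1 T2 \<omega> =
     (let h = fst (fst \<omega>); c1 = snd (fst \<omega>); c2 = snd \<omega>;
          S1 = ubs_sample p h c1 J1 T1; S2 = ubs_sample p h c2 J2 T2
      in p / (e1 * e2) * (\<Sum>(t1, t2) \<in> join_on J1 J2 S1 S2. W t1))"

definition cnt :: "('i \<Rightarrow> 'u) \<Rightarrow> 'i set \<Rightarrow> 'u \<Rightarrow> nat" where
  "cnt J T v = card {t \<in> T. J t = v}"

definition grp_mean :: "('i \<Rightarrow> 'u) \<Rightarrow> ('i \<Rightarrow> real) \<Rightarrow> 'i set \<Rightarrow> 'u \<Rightarrow> real" where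
  "grp_mean J W T v = (\<Sum>t \<in> {t \<in> T. J t = v}. W t) / real (cnt J T v)"

definition grp_var :: "('i \<Rightarrow> 'u) \<Rightarrow> ('i \<Rightarrow> real) \<Rightarrow> 'i set \<Rightarrow> 'u \<Rightarrow> real" where
  "grp_var J W T v =
     (\<Sum>t \<in> {t \<in> T. J t = v}. (W t - grp_mean J W T v)\<^sup>2) / real (cnt J T v)"

definition beta1 where
  "beta1 U J1 J2 W T1 T2 = (\<Sum>v\<in>U. if cnt J1 T1 v = 0 then 0 else
     real (cnt J1 T1 v)^2 * (grp_mean J1 W T1 v)\<^sup>2 * real (cnt J2 T2 v))"
definition beta2 where
  "beta2 U J1 J2 W T1 T2 = (\<Sum>v\<in>U. if cnt J1 T1 v = 0 then 0 else
     real (cnt J1 T1 v) * ((grp_mean J1 W T1 v)\<^sup>2 + grp_var J1 W T1 v) * real (cnt J2 T2 v)^2)"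
definition beta3 where
  "beta3 U J1 J2 W T1 T2 = (\<Sum>v\<in>U. if cnt J1 T1 v = 0 then 0 else
     real (cnt J1 T1 v) * ((grp_mean J1 W T1 v)\<^sup>2 + grp_var J1 W T1 v) * real (cnt J2 T2 v))"
definition beta4 where
  "beta4 U J1 J2 W T1 T2 = (\<Sum>v\<in>U. if cnt J1 T1 v = 0 then 0 else
     real (cnt J1 T1 v)^2 * (grp_mean J1 W T1 v)\<^sup>2 * real (cnt J2 T2 v)^2)"

end

theory Submission
  imports Defs
begin

lemma pair_prod_int:
  fixes f :: "'a \<Rightarrow> real" and g :: "'b \<Rightarrow> real"
  assumes P1: "prob_space M1" and P2: "prob_space M2"
    and fm[measurable]: "f \<in> borel_measurable M1" and gm[measurable]: "g \<in> borel_measurable M2"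
    and fb: "\<And>x. x \<in> space M1 \<Longrightarrow> \<bar>f x\<bar> \<le> B"
    and gb: "\<And>y. y \<in> space M2 \<Longrightarrow> \<bar>g y\<bar> \<le> C"
  shows "(\<integral>x. f (fst x) * g (snd x) \<partial>(M1 \<Otimes>\<^sub>M M2)) = integral\<^sup>L M1 f * integral\<^sup>L M2 g"
proof -
  interpret p1: prob_space M1 by fact
  interpret p2: prob_space M2 by fact
  interpret pair_prob_space M1 M2 by unfold_locales
  have "integrable (M1 \<Otimes>\<^sub>M M2) (\<lambda>x. f (fst x) * g (snd x))"
  proof (rule integrable_const_bound[where B="B*C"])
    show "AE x in M1 \<Otimes>\<^sub>M M2. norm (f (fst x) * g (snd x)) \<le> B * C"
    proof (rule AE_I2)
      fix x assume x: "x \<in> space (M1 \<Otimes>\<^sub>M M2)"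
      then have "fst x \<in> space M1" "snd x \<in> space M2" by (auto simp: space_pair_measure)
      then have "\<bar>f (fst x)\<bar> \<le> B" "\<bar>g (snd x)\<bar> \<le> C" using fb gb by auto
      then show "norm (f (fst x) * g (snd x)) \<le> B * C"
        by (simp add: abs_mult mult_mono')
    qed
  qed measurable
  then have "(\<integral>x. (\<integral>y. f (fst (x,y)) * g (snd (x,y)) \<partial>M2) \<partial>M1) = (\<integral>x. f (fst x) * g (snd x) \<partial>(M1 \<Otimes>\<^sub>M M2))"
    by (rule integral_fst')
  then show ?thesis by simp
qed

lemma PiM_int2:
  fixes F :: "'a \<Rightarrow> real"
  assumes "finite I" "prob_space N" "i \<in> I" "j \<in> I"
    and Fm[measurable]: "F \<in> borel_measurable N"
    and Fb: "\<And>x. x \<in> space N \<Longrightarrow> \<bar>F x\<bar> \<le> B"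
  shows "(\<integral>x. F (x i) * F (x j) \<partial>PiM I (\<lambda>_. N)) =
     (if i = j then (\<integral>y. F y * F y \<partial>N) else integral\<^sup>L N F * integral\<^sup>L N F)"
proof -
  interpret N: prob_space N by fact
  interpret product_prob_space "\<lambda>_. N" by (rule product_prob_spaceI) fact
  have intF: "integrable N F"
    by (rule N.integrable_const_bound[where B=B]) (use Fb in auto)
  have intFF: "integrable N (\<lambda>y. F y * F y)"
  proof (rule N.integrable_const_bound[where B="B*B"])
    show "AE x in N. norm (F x * F x) \<le> B * B"
    proof (rule AE_I2)
      fix x assume "x \<in> space N"
      then have "\<bar>F x\<bar> \<le> B" by (rule Fb)
      moreover have "0 \<le> B" using \<open>\<bar>F x\<bar> \<le> B\<close> by linarith
      ultimately have "\<bar>F x\<bar> * \<bar>F x\<bar> \<le> B * B" by (intro mult_mono) auto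
      then show "norm (F x * F x) \<le> B * B"
        by (simp add: abs_mult)
    qed
  qed measurable
  define f where "f k = (if k = i \<and> k = j then (\<lambda>y. F y * F y) else if k = i \<or> k = j then F else (\<lambda>_. 1))" for k
  have prodeq: "(\<Prod>k\<in>I. f k (x k)) = F (x i) * F (x j)" for x
  proof (cases "i = j")
    case True
    then show ?thesis using assms(1,3)
      by (simp add: prod.remove[of I i] f_def)
  next
    case False
    have "(\<Prod>k\<in>I. f k (x k)) = f i (x i) * (\<Prod>k\<in>I - {i}. f k (x k))"
      using assms(1,3) by (simp add: prod.remove[of I i])
    also have "(\<Prod>k\<in>I - {i}. f k (x k)) = f j (x j) * (\<Prod>k\<in>I - {i} - {j}. f k (x k))"
      using assms(1,4) False by (simp add: prod.remove[of "I - {i}" j])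
    also have "(\<Prod>k\<in>I - {i} - {j}. f k (x k)) = 1"
      by (rule prod.neutral) (auto simp: f_def)
    finally show ?thesis using False by (simp add: f_def)
  qed
  have "(\<integral>x. (\<Prod>k\<in>I. f k (x k)) \<partial>PiM I (\<lambda>_. N)) = (\<Prod>k\<in>I. integral\<^sup>L N (f k))"
    by (rule product_integral_prod) (use assms(1) intF intFF in \<open>auto simp: f_def\<close>)
  also have "\<dots> = (if i = j then (\<integral>y. F y * F y \<partial>N) else integral\<^sup>L N F * integral\<^sup>L N F)"
  proof (cases "i = j")
    case True
    then show ?thesis using assms(1,3) by (simp add: prod.remove[of I i] f_def N.prob_space)
  next
    case False
    have "(\<Prod>k\<in>I. integral\<^sup>L N (f k)) = integral\<^sup>L N (f i) * (\<Prod>k\<in>I - {i}. integral\<^sup>L N (f k))"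
      using assms(1,3) by (simp add: prod.remove[of I i])
    also have "(\<Prod>k\<in>I - {i}. integral\<^sup>L N (f k)) = integral\<^sup>L N (f j) * (\<Prod>k\<in>I - {i} - {j}. integral\<^sup>L N (f k))"
      using assms(1,4) False by (simp add: prod.remove[of "I - {i}" j])
    also have "(\<Prod>k\<in>I - {i} - {j}. integral\<^sup>L N (f k)) = 1"
      by (rule prod.neutral) (auto simp: f_def N.prob_space)
    finally show ?thesis using False by (simp add: f_def)
  qed
  finally show ?thesis by (simp add: prodeq)
qed

lemma PiM_int1:
  fixes F :: "'a \<Rightarrow> real"
  assumes "finite I" "prob_space N" "i \<in> I"
    and Fm[measurable]: "F \<in> borel_measurable N"
    and Fb: "\<And>x. x \<in> space N \<Longrightarrow> \<bar>F x\<bar> \<le> B"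
  shows "(\<integral>x. F (x i) \<partial>PiM I (\<lambda>_. N)) = integral\<^sup>L N F"
proof -
  interpret N: prob_space N by fact
  interpret product_prob_space "\<lambda>_. N" by (rule product_prob_spaceI) fact
  have intF: "integrable N F"
    by (rule N.integrable_const_bound[where B=B]) (use Fb in auto)
  define f where "f k = (if k = i then F else (\<lambda>_. 1))" for k
  have prodeq: "(\<Prod>k\<in>I. f k (x k)) = F (x i)" for x
    using assms(1,3) by (simp add: prod.remove[of I i] f_def)
  have "(\<integral>x. (\<Prod>k\<in>I. f k (x k)) \<partial>PiM I (\<lambda>_. N)) = (\<Prod>k\<in>I. integral\<^sup>L N (f k))"
    by (rule product_integral_prod) (use assms(1) intF in \<open>auto simp: f_def\<close>)
  also have "\<dots> = integral\<^sup>L N F"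
    using assms(1,3) by (simp add: prod.remove[of I i] f_def N.prob_space)
  finally show ?thesis by (simp add: prodeq)
qed

abbreviation Unif where "Unif \<equiv> uniform_measure lborel {0..1::real}"

lemma prob_UN: "prob_space Unif"
  by (rule prob_space_uniform_measure) auto

lemma int_UN: assumes "0 \<le> p" "p \<le> 1"
  shows "(\<integral>x. (if x < p then 1 else 0::real) \<partial>Unif) = p"
proof -
  have "(\<lambda>x. (if x < p then 1 else 0::real)) = indicator {..<p}"
    by (auto simp: indicator_def)
  then have "(\<integral>x. (if x < p then 1 else 0::real) \<partial>Unif) = measure Unif ({..<p} \<inter> space Unif)"
    by simp
  also have "\<dots> = measure lborel ({0..1} \<inter> {..<p}) / measure lborel {0..1::real}"
    by (subst measure_uniform_measure) auto
  also have "{0..1} \<inter> {..<p} = {0..<p}" using assms by auto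
  finally show ?thesis using assms by simp
qed

lemma bern_prob: "prob_space (measure_pmf (bernoulli_pmf q))"
  by (rule prob_space_measure_pmf)

definition Xf :: "real \<Rightarrow> 'u \<Rightarrow> ('u \<Rightarrow> real) \<Rightarrow> real" where
  "Xf p v h = (if h v < p then 1 else 0)"

lemma H1:
  assumes "finite U" "v \<in> U" "v' \<in> U" "0 \<le> p" "p \<le> 1"
  shows "(\<integral>h. Xf p v h * Xf p v' h \<partial>PiM U (\<lambda>_. Unif)) = (if v = v' then p else p * p)"
proof -
  have "(\<integral>h. Xf p v h * Xf p v' h \<partial>PiM U (\<lambda>_. Unif)) =
     (if v = v' then (\<integral>y. (if y < p then 1 else 0::real) * (if y < p then 1 else 0) \<partial>Unif)
      else (\<integral>y. (if y < p then 1 else 0::real) \<partial>Unif) * (\<integral>y. (if y < p then 1 else 0::real) \<partial>Unif))"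
    unfolding Xf_def by (rule PiM_int2[where B=1]) (use assms prob_UN in auto)
  also have "(\<lambda>y. (if y < p then 1 else 0::real) * (if y < p then 1 else 0)) = (\<lambda>y. if y < p then 1 else 0)"
    by auto
  finally show ?thesis using int_UN[OF assms(4,5)] by simp
qed

lemma H0:
  assumes "finite U" "v \<in> U" "0 \<le> p" "p \<le> 1"
  shows "(\<integral>h. Xf p v h \<partial>PiM U (\<lambda>_. Unif)) = p"
proof -
  have "(\<integral>h. Xf p v h \<partial>PiM U (\<lambda>_. Unif)) = (\<integral>y. (if y < p then 1 else 0::real) \<partial>Unif)"
    unfolding Xf_def by (rule PiM_int1[where B=1]) (use assms prob_UN in auto)
  then show ?thesis using int_UN[OF assms(3,4)] by simp
qed

definition ind :: "bool \<Rightarrow> real" where "ind b = (if b then 1 else 0)"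

lemma C2int:
  assumes "finite T" "t \<in> T" "t' \<in> T" "0 \<le> q" "q \<le> 1"
  shows "(\<integral>c. ind (c t) * ind (c t') \<partial>PiM T (\<lambda>_. measure_pmf (bernoulli_pmf q))) = (if t = t' then q else q * q)"
proof -
  have "(\<integral>c. ind (c t) * ind (c t') \<partial>PiM T (\<lambda>_. measure_pmf (bernoulli_pmf q))) =
     (if t = t' then (\<integral>y. ind y * ind y \<partial>bernoulli_pmf q) else (\<integral>y. ind y \<partial>bernoulli_pmf q) * (\<integral>y. ind y \<partial>bernoulli_pmf q))"
    by (rule PiM_int2[where B=1]) (use assms bern_prob in \<open>auto simp: ind_def\<close>)
  then show ?thesis using assms by (simp add: ind_def)
qed

lemma C1int:
  assumes "finite T" "t \<in> T" "0 \<le> q" "q \<le> 1"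
  shows "(\<integral>c. ind (c t) \<partial>PiM T (\<lambda>_. measure_pmf (bernoulli_pmf q))) = q"
proof -
  have "(\<integral>c. ind (c t) \<partial>PiM T (\<lambda>_. measure_pmf (bernoulli_pmf q))) = (\<integral>y. ind y \<partial>bernoulli_pmf q)"
    by (rule PiM_int1[where B=1]) (use assms bern_prob in \<open>auto simp: ind_def\<close>)
  then show ?thesis using assms by (simp add: ind_def)
qed

abbreviation Bn where "Bn T q \<equiv> PiM T (\<lambda>_. measure_pmf (bernoulli_pmf q))"

lemma ind_meas[measurable]:
  assumes "t \<in> T"
  shows "(\<lambda>c. ind (c t)) \<in> borel_measurable (Bn T q)"
  using assms by measurable

lemma prob_Bn: "prob_space (Bn T q)"
  by (rule prob_space_PiM) (rule bern_prob)

lemma int_ind2: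
  assumes "t \<in> T" "t' \<in> T"
  shows "integrable (Bn T q) (\<lambda>c. ind (c t) * ind (c t'))"
proof -
  interpret prob_space "Bn T q" by (rule prob_Bn)
  show ?thesis
    by (rule integrable_const_bound[where B=1]) (use assms in \<open>auto simp: ind_def\<close>)
qed

lemma int_ind1:
  assumes "t \<in> T"
  shows "integrable (Bn T q) (\<lambda>c. ind (c t))"
proof -
  interpret prob_space "Bn T q" by (rule prob_Bn)
  show ?thesis
    by (rule integrable_const_bound[where B=1]) (use assms in \<open>auto simp: ind_def\<close>)
qed

definition Aw :: "('i \<Rightarrow> real) \<Rightarrow> 'i set \<Rightarrow> ('i \<Rightarrow> bool) \<Rightarrow> real" where
  "Aw w G c = (\<Sum>t\<in>G. w t * ind (c t))"

lemma Aw_int2: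
  assumes "finite T" "G \<subseteq> T" "G' \<subseteq> T" "0 \<le> q" "q \<le> 1"
  shows "(\<integral>c. Aw w G c * Aw w G' c \<partial>Bn T q) =
     q * q * (\<Sum>t\<in>G. w t) * (\<Sum>t\<in>G'. w t) + (q - q * q) * (\<Sum>t\<in>G \<inter> G'. w t * w t)"
proof -
  have fG: "finite G" "finite G'" using assms finite_subset by auto
  have "(\<integral>c. Aw w G c * Aw w G' c \<partial>Bn T q) =
        (\<integral>c. (\<Sum>t\<in>G. \<Sum>t'\<in>G'. (w t * w t') * (ind (c t) * ind (c t'))) \<partial>Bn T q)"
    unfolding Aw_def by (simp add: sum_product mult_ac)
  also have "\<dots> = (\<Sum>t\<in>G. \<Sum>t'\<in>G'. (w t * w t') * (\<integral>c. ind (c t) * ind (c t') \<partial>Bn T q))"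
    using assms by (simp add: integral_sum int_ind2 subsetD integrable_sum)
  also have "\<dots> = (\<Sum>t\<in>G. \<Sum>t'\<in>G'. (w t * w t') * (if t = t' then q else q * q))"
    using assms by (intro sum.cong refl) (simp add: C2int subsetD)
  also have "\<dots> = (\<Sum>t\<in>G. \<Sum>t'\<in>G'. q * q * (w t * w t') + (if t = t' then (q - q * q) * (w t * w t') else 0))"
    by (intro sum.cong refl) (simp add: algebra_simps)
  also have "\<dots> = q * q * (\<Sum>t\<in>G. w t) * (\<Sum>t\<in>G'. w t) + (\<Sum>t\<in>G. if t \<in> G' then (q - q * q) * (w t * w t) else 0)"
    using fG by (simp add: sum.distrib sum_distrib_left sum_product mult_ac)
  also have "(\<Sum>t\<in>G. if t \<in> G' then (q - q * q) * (w t * w t) else 0) = (q - q * q) * (\<Sum>t\<in>G \<inter> G'. w t * w t)"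
    using fG by (simp add: sum.If_cases sum_distrib_left Int_def)
  finally show ?thesis .
qed

lemma Aw_int1:
  assumes "finite T" "G \<subseteq> T" "0 \<le> q" "q \<le> 1"
  shows "(\<integral>c. Aw w G c \<partial>Bn T q) = q * (\<Sum>t\<in>G. w t)"
proof -
  have fG: "finite G" using assms finite_subset by auto
  have "(\<integral>c. Aw w G c \<partial>Bn T q) = (\<Sum>t\<in>G. w t * (\<integral>c. ind (c t) \<partial>Bn T q))"
    unfolding Aw_def using assms by (simp add: integral_sum int_ind1 subsetD)
  also have "\<dots> = (\<Sum>t\<in>G. w t * q)"
    using assms by (intro sum.cong refl) (simp add: C1int subsetD)
  finally show ?thesis by (simp add: sum_distrib_left mult_ac)
qed

lemma alg:
  fixes p e1 e2 s m b :: real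
  assumes "p > 0" "e1 > 0" "e2 > 0"
  shows "(p / (e1 * e2)) * (p / (e1 * e2)) * (p * ((e1/p) * (e1/p) * (s * s) + (e1/p - (e1/p) * (e1/p)) * m) * ((e2/p) * (e2/p) * (b*b) + (e2/p - (e2/p) * (e2/p)) * b)
     - (p * (e1/p) * s * ((e2/p) * b)) * (p * (e1/p) * s * ((e2/p) * b)))
   = (1 / e2 - 1 / p) * (s * s*b) + (1 / e1 - 1 / p) * (m * (b*b)) + (p / (e1 * e2) - 1 / e1 - 1 / e2 + 1 / p) * (m * b)
     + (1 / p - 1) * (s * s*(b*b))"
  using assms by (simp add: field_simps power2_eq_square)

lemma var_ident:
  fixes W :: "'i \<Rightarrow> real"
  assumes "finite G" "G \<noteq> {}"
  defines "a \<equiv> real (card G)"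
  defines "mu \<equiv> (\<Sum>t\<in>G. W t) / a"
  shows "a * (mu\<^sup>2 + (\<Sum>t\<in>G. (W t - mu)\<^sup>2) / a) = (\<Sum>t\<in>G. W t * W t)"
proof -
  have a0: "a > 0" using assms by (simp add: a_def card_gt_0_iff)
  have "(\<Sum>t\<in>G. (W t - mu)\<^sup>2) = (\<Sum>t\<in>G. W t * W t) - 2 * mu * (\<Sum>t\<in>G. W t) + a * mu\<^sup>2"
  proof -
    have "(\<Sum>t\<in>G. (W t - mu)\<^sup>2) = (\<Sum>t\<in>G. W t * W t - 2 * mu * W t + mu * mu)"
      by (intro sum.cong refl) (simp add: power2_eq_square algebra_simps)
    also have "\<dots> = (\<Sum>t\<in>G. W t * W t) - 2 * mu * (\<Sum>t\<in>G. W t) + a * (mu * mu)"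
      by (simp add: sum.distrib sum_subtractf sum_distrib_left a_def)
    finally show ?thesis by (simp add: power2_eq_square)
  qed
  moreover have "(\<Sum>t\<in>G. W t) = a * mu" using a0 by (simp add: mu_def)
  ultimately show ?thesis using a0 by (simp add: field_simps power2_eq_square)
qed

lemma triple_int:
  fixes f :: "'a \<Rightarrow> real" and g :: "'b \<Rightarrow> real" and k :: "'c \<Rightarrow> real"
  assumes P1: "prob_space M1" and P2: "prob_space M2" and P3: "prob_space M3"
    and fm[measurable]: "f \<in> borel_measurable M1" and gm[measurable]: "g \<in> borel_measurable M2"
    and km[measurable]: "k \<in> borel_measurable M3"
    and fb: "\<And>x. x \<in> space M1 \<Longrightarrow> \<bar>f x\<bar> \<le> B1"
    and gb: "\<And>y. y \<in> space M2 \<Longrightarrow> \<bar>g y\<bar> \<le> B2"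
    and kb: "\<And>y. y \<in> space M3 \<Longrightarrow> \<bar>k y\<bar> \<le> B3"
  shows "integrable ((M1 \<Otimes>\<^sub>M M2) \<Otimes>\<^sub>M M3) (\<lambda>x. f (fst (fst x)) * g (snd (fst x)) * k (snd x))"
    and "(\<integral>x. f (fst (fst x)) * g (snd (fst x)) * k (snd x) \<partial>((M1 \<Otimes>\<^sub>M M2) \<Otimes>\<^sub>M M3))
         = integral\<^sup>L M1 f * integral\<^sup>L M2 g * integral\<^sup>L M3 k"
proof -
  have P12: "prob_space (M1 \<Otimes>\<^sub>M M2)" by (rule prob_space_pair[OF P1 P2])
  have P123: "prob_space ((M1 \<Otimes>\<^sub>M M2) \<Otimes>\<^sub>M M3)" by (rule prob_space_pair[OF P12 P3])
  have b12: "\<bar>f (fst x) * g (snd x)\<bar> \<le> B1 * B2" if "x \<in> space (M1 \<Otimes>\<^sub>M M2)" for x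
  proof -
    have "\<bar>f (fst x)\<bar> \<le> B1" "\<bar>g (snd x)\<bar> \<le> B2" using that fb gb by (auto simp: space_pair_measure)
    then show ?thesis by (simp add: abs_mult mult_mono')
  qed
  have b123: "\<bar>f (fst (fst x)) * g (snd (fst x)) * k (snd x)\<bar> \<le> B1 * B2 * B3" if "x \<in> space ((M1 \<Otimes>\<^sub>M M2) \<Otimes>\<^sub>M M3)" for x
  proof -
    have "\<bar>f (fst (fst x)) * g (snd (fst x))\<bar> \<le> B1 * B2" "\<bar>k (snd x)\<bar> \<le> B3"
      using that b12 kb by (auto simp: space_pair_measure)
    then show ?thesis by (simp add: abs_mult mult_mono')
  qed
  interpret P: prob_space "(M1 \<Otimes>\<^sub>M M2) \<Otimes>\<^sub>M M3" by (rule P123)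
  show "integrable ((M1 \<Otimes>\<^sub>M M2) \<Otimes>\<^sub>M M3) (\<lambda>x. f (fst (fst x)) * g (snd (fst x)) * k (snd x))"
    by (rule P.integrable_const_bound[where B="B1*B2*B3"]) (use b123 in auto)
  have e1: "(\<integral>x. (\<lambda>y. f (fst y) * g (snd y)) (fst x) * k (snd x) \<partial>((M1 \<Otimes>\<^sub>M M2) \<Otimes>\<^sub>M M3))
      = (\<integral>y. f (fst y) * g (snd y) \<partial>(M1 \<Otimes>\<^sub>M M2)) * integral\<^sup>L M3 k"
    by (rule pair_prod_int[OF P12 P3 _ km b12 kb]) measurable
  have e2: "(\<integral>y. f (fst y) * g (snd y) \<partial>(M1 \<Otimes>\<^sub>M M2)) = integral\<^sup>L M1 f * integral\<^sup>L M2 g"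
    by (rule pair_prod_int[OF P1 P2 fm gm fb gb])
  show "(\<integral>x. f (fst (fst x)) * g (snd (fst x)) * k (snd x) \<partial>((M1 \<Otimes>\<^sub>M M2) \<Otimes>\<^sub>M M3))
         = integral\<^sup>L M1 f * integral\<^sup>L M2 g * integral\<^sup>L M3 k"
    using e1 e2 by simp
qed

lemma Aw_meas:
  assumes "G \<subseteq> T"
  shows "Aw w G \<in> borel_measurable (Bn T q)"
  unfolding Aw_def using assms
  by (intro borel_measurable_sum borel_measurable_times borel_measurable_const) (auto intro: ind_meas)

lemma Aw_bound:
  assumes "finite T" "G \<subseteq> T"
  shows "\<bar>Aw w G c\<bar> \<le> (\<Sum>t\<in>T. \<bar>w t\<bar>)"
proof -
  have "\<bar>Aw w G c\<bar> \<le> (\<Sum>t\<in>G. \<bar>w t * ind (c t)\<bar>)" unfolding Aw_def by (rule sum_abs)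
  also have "\<dots> \<le> (\<Sum>t\<in>G. \<bar>w t\<bar>)" by (intro sum_mono) (simp add: ind_def abs_mult)
  also have "\<dots> \<le> (\<Sum>t\<in>T. \<bar>w t\<bar>)" by (intro sum_mono2 assms) auto
  finally show ?thesis .
qed

lemma Xf_meas:
  assumes "v \<in> U"
  shows "Xf p v \<in> borel_measurable (PiM U (\<lambda>_. Unif))"
  unfolding Xf_def using assms by measurable

lemma Xf_bound: "\<bar>Xf p v h\<bar> \<le> 1" by (simp add: Xf_def)

lemma join_rewrite:
  assumes fU: "finite U" and f1: "finite T1" and f2: "finite T2"
    and J1U: "J1 ` T1 \<subseteq> U" and J2U: "J2 ` T2 \<subseteq> U"
  shows "(\<Sum>(t1, t2) \<in> join_on J1 J2 (ubs_sample p h c1 J1 T1) (ubs_sample p h c2 J2 T2). W t1)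
       = (\<Sum>v\<in>U. Xf p v h * Aw W {t\<in>T1. J1 t = v} c1 * Aw (\<lambda>_. 1) {t\<in>T2. J2 t = v} c2)"
proof -
  define P where "P t1 t2 \<longleftrightarrow> J1 t1 = J2 t2 \<and> h (J1 t1) < p \<and> c1 t1 \<and> c2 t2" for t1 t2
  have jeq: "join_on J1 J2 (ubs_sample p h c1 J1 T1) (ubs_sample p h c2 J2 T2) = {x \<in> T1 \<times> T2. P (fst x) (snd x)}"
    by (auto simp: join_on_def ubs_sample_def P_def)
  have "(\<Sum>(t1, t2) \<in> join_on J1 J2 (ubs_sample p h c1 J1 T1) (ubs_sample p h c2 J2 T2). W t1)
      = (\<Sum>x \<in> T1 \<times> T2. if P (fst x) (snd x) then W (fst x) else 0)"
    unfolding jeq using f1 f2 by (simp add: sum.inter_filter case_prod_beta)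
  also have "\<dots> = (\<Sum>t1\<in>T1. \<Sum>t2\<in>T2. if P t1 t2 then W t1 else 0)"
    by (simp add: sum.cartesian_product case_prod_beta)
  finally have L: "(\<Sum>(t1, t2) \<in> join_on J1 J2 (ubs_sample p h c1 J1 T1) (ubs_sample p h c2 J2 T2). W t1)
      = (\<Sum>t1\<in>T1. \<Sum>t2\<in>T2. if P t1 t2 then W t1 else 0)" .
  have "(\<Sum>v\<in>U. Xf p v h * Aw W {t\<in>T1. J1 t = v} c1 * Aw (\<lambda>_. 1) {t\<in>T2. J2 t = v} c2)
     = (\<Sum>v\<in>U. \<Sum>t1\<in>T1. \<Sum>t2\<in>T2. if J1 t1 = v \<and> J2 t2 = v then Xf p v h * (W t1 * ind (c1 t1)) * ind (c2 t2) else 0)"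
  proof (intro sum.cong refl)
    fix v assume "v \<in> U"
    have "Aw W {t\<in>T1. J1 t = v} c1 = (\<Sum>t1\<in>T1. if J1 t1 = v then W t1 * ind (c1 t1) else 0)"
      unfolding Aw_def using f1 by (simp add: sum.inter_filter)
    moreover have "Aw (\<lambda>_. 1) {t\<in>T2. J2 t = v} c2 = (\<Sum>t2\<in>T2. if J2 t2 = v then ind (c2 t2) else 0)"
      unfolding Aw_def using f2 by (simp add: sum.inter_filter)
    ultimately show "Xf p v h * Aw W {t\<in>T1. J1 t = v} c1 * Aw (\<lambda>_. 1) {t\<in>T2. J2 t = v} c2
       = (\<Sum>t1\<in>T1. \<Sum>t2\<in>T2. if J1 t1 = v \<and> J2 t2 = v then Xf p v h * (W t1 * ind (c1 t1)) * ind (c2 t2) else 0)"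
    proof -
      have "Xf p v h * (\<Sum>t1\<in>T1. if J1 t1 = v then W t1 * ind (c1 t1) else 0) * (\<Sum>t2\<in>T2. if J2 t2 = v then ind (c2 t2) else 0)
         = (\<Sum>t1\<in>T1. \<Sum>t2\<in>T2. Xf p v h * (if J1 t1 = v then W t1 * ind (c1 t1) else 0) * (if J2 t2 = v then ind (c2 t2) else 0))"
        by (subst mult.assoc, subst sum_product, simp only: sum_distrib_left mult.assoc)
      also have "\<dots> = (\<Sum>t1\<in>T1. \<Sum>t2\<in>T2. if J1 t1 = v \<and> J2 t2 = v then Xf p v h * (W t1 * ind (c1 t1)) * ind (c2 t2) else 0)"
        by (intro sum.cong refl) auto
      finally show ?thesis by (simp only: \<open>Aw W {t\<in>T1. J1 t = v} c1 = _\<close> \<open>Aw (\<lambda>_. 1) {t\<in>T2. J2 t = v} c2 = _\<close>)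
    qed
  qed
  also have "\<dots> = (\<Sum>t1\<in>T1. \<Sum>t2\<in>T2. \<Sum>v\<in>U. if J1 t1 = v \<and> J2 t2 = v then Xf p v h * (W t1 * ind (c1 t1)) * ind (c2 t2) else 0)"
    by (subst sum.swap) (simp add: sum.swap[of _ U])
  also have "\<dots> = (\<Sum>t1\<in>T1. \<Sum>t2\<in>T2. if P t1 t2 then W t1 else 0)"
  proof (intro sum.cong refl)
    fix t1 t2 assume t1: "t1 \<in> T1" and t2: "t2 \<in> T2"
    have "J1 t1 \<in> U" using t1 J1U by auto
    have "(\<Sum>v\<in>U. if J1 t1 = v \<and> J2 t2 = v then Xf p v h * (W t1 * ind (c1 t1)) * ind (c2 t2) else 0)
        = (\<Sum>v\<in>U. if v = J1 t1 then (if J1 t1 = J2 t2 then Xf p v h * (W t1 * ind (c1 t1)) * ind (c2 t2) else 0) else 0)"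
      by (intro sum.cong refl) auto
    also have "\<dots> = (if J1 t1 = J2 t2 then Xf p (J1 t1) h * (W t1 * ind (c1 t1)) * ind (c2 t2) else 0)"
      using fU \<open>J1 t1 \<in> U\<close> by (simp add: sum.delta')
    also have "\<dots> = (if P t1 t2 then W t1 else 0)"
      by (auto simp: P_def Xf_def ind_def)
    finally show "(\<Sum>v\<in>U. if J1 t1 = v \<and> J2 t2 = v then Xf p v h * (W t1 * ind (c1 t1)) * ind (c2 t2) else 0)
        = (if P t1 t2 then W t1 else 0)" .
  qed
  finally show ?thesis using L by simp
qed

lemma abs_mult_le: "\<bar>a\<bar> \<le> A \<Longrightarrow> \<bar>b\<bar> \<le> B \<Longrightarrow> \<bar>a * b\<bar> \<le> A * (B::real)"
  by (simp add: abs_mult mult_mono')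

lemma beta_terms:
  fixes W :: "'i \<Rightarrow> real" and J1 :: "'i \<Rightarrow> 'u" and v :: 'u
  assumes "finite T1"
  defines "G \<equiv> {t\<in>T1. J1 t = v}"
  shows "(if cnt J1 T1 v = 0 then 0 else real (cnt J1 T1 v)^2 * (grp_mean J1 W T1 v)\<^sup>2 * x)
          = (\<Sum>t\<in>G. W t) * (\<Sum>t\<in>G. W t) * x"
    and "(if cnt J1 T1 v = 0 then 0 else real (cnt J1 T1 v) * ((grp_mean J1 W T1 v)\<^sup>2 + grp_var J1 W T1 v) * x)
          = (\<Sum>t\<in>G. W t * W t) * x"
proof -
  have fG: "finite G" using assms by (simp add: G_def)
  have c: "cnt J1 T1 v = card G" by (simp add: cnt_def G_def)
  have m: "grp_mean J1 W T1 v = (\<Sum>t\<in>G. W t) / real (card G)" by (simp add: grp_mean_def G_def cnt_def)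
  have vv: "grp_var J1 W T1 v = (\<Sum>t\<in>G. (W t - (\<Sum>t\<in>G. W t) / real (card G))\<^sup>2) / real (card G)"
    by (simp add: grp_var_def m[unfolded G_def] G_def cnt_def)
  show "(if cnt J1 T1 v = 0 then 0 else real (cnt J1 T1 v)^2 * (grp_mean J1 W T1 v)\<^sup>2 * x)
          = (\<Sum>t\<in>G. W t) * (\<Sum>t\<in>G. W t) * x"
  proof (cases "G = {}")
    case True then show ?thesis by (simp add: c)
  next
    case False
    then have "card G > 0" using fG by (simp add: card_gt_0_iff)
    then show ?thesis by (simp add: c m field_simps power2_eq_square)
  qed
  show "(if cnt J1 T1 v = 0 then 0 else real (cnt J1 T1 v) * ((grp_mean J1 W T1 v)\<^sup>2 + grp_var J1 W T1 v) * x)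
          = (\<Sum>t\<in>G. W t * W t) * x"
  proof (cases "G = {}")
    case True then show ?thesis by (simp add: c)
  next
    case False
    then have "card G > 0" using fG by (simp add: card_gt_0_iff)
    moreover have "real (card G) * (((\<Sum>t\<in>G. W t) / real (card G))\<^sup>2 + (\<Sum>t\<in>G. (W t - (\<Sum>t\<in>G. W t) / real (card G))\<^sup>2) / real (card G))
        = (\<Sum>t\<in>G. W t * W t)"
      by (rule var_ident[OF fG False])
    ultimately show ?thesis by (simp add: c m vv)
  qed
qed

theorem theorem7:
  fixes U :: "'u set" and T1 :: "'i set" and T2 :: "'k set"
    and J1 :: "'i \<Rightarrow> 'u" and J2 :: "'k \<Rightarrow> 'u" and W :: "'i \<Rightarrow> real"
    and e1 e2 p :: real
  assumes "finite U" and "finite T1" and "finite T2"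
    and "J1 ` T1 \<subseteq> U" and "J2 ` T2 \<subseteq> U"
    and "0 < e1" "e1 \<le> 1" "0 < e2" "e2 \<le> 1"
    and "max e1 e2 \<le> p" "p \<le> 1"
  shows "prob_space.variance (ubs_space U T1 T2 (e1 / p) (e2 / p))
           (J_sum_est p e1 e2 J1 J2 W T1 T2)
         = (1 / e2 - 1 / p) * beta1 U J1 J2 W T1 T2
         + (1 / e1 - 1 / p) * beta2 U J1 J2 W T1 T2
         + (p / (e1 * e2) - 1 / e1 - 1 / e2 + 1 / p) * beta3 U J1 J2 W T1 T2
         + (1 / p - 1) * beta4 U J1 J2 W T1 T2"
proof -
  note fU = assms(1) and f1 = assms(2) and f2 = assms(3)
  have p0: "0 < p" using assms by auto
  define q1 where "q1 = e1 / p"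
  define q2 where "q2 = e2 / p"
  have q1b: "0 \<le> q1" "q1 \<le> 1" using assms p0 by (auto simp: q1_def field_simps)
  have q2b: "0 \<le> q2" "q2 \<le> 1" using assms p0 by (auto simp: q2_def field_simps)
  have pb: "0 \<le> p" "p \<le> 1" using p0 assms by auto
  define k where "k = p / (e1 * e2)"
  define H where "H = PiM U (\<lambda>_. Unif)"
  define C1 where "C1 = Bn T1 q1"
  define C2 where "C2 = Bn T2 q2"
  define M where "M = (H \<Otimes>\<^sub>M C1) \<Otimes>\<^sub>M C2"
  have Meq: "ubs_space U T1 T2 (e1 / p) (e2 / p) = M"
    by (simp add: ubs_space_def M_def H_def C1_def C2_def q1_def q2_def)
  have PH: "prob_space H" unfolding H_def by (rule prob_space_PiM) (rule prob_UN)
  have PC1: "prob_space C1" unfolding C1_def by (rule prob_Bn)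
  have PC2: "prob_space C2" unfolding C2_def by (rule prob_Bn)
  have PM: "prob_space M" unfolding M_def by (intro prob_space_pair PH PC1 PC2)
  interpret P: prob_space M by (rule PM)
  define G1 where "G1 v = {t\<in>T1. J1 t = v}" for v
  define G2 where "G2 v = {t\<in>T2. J2 t = v}" for v
  have G1s: "G1 v \<subseteq> T1" for v by (auto simp: G1_def)
  have G2s: "G2 v \<subseteq> T2" for v by (auto simp: G2_def)
  define s where "s v = (\<Sum>t\<in>G1 v. W t)" for v
  define m where "m v = (\<Sum>t\<in>G1 v. W t * W t)" for v
  define b where "b v = real (card (G2 v))" for v
  define SW where "SW = (\<Sum>t\<in>T1. \<bar>W t\<bar>)"
  define S1 where "S1 = (\<Sum>t\<in>T2. \<bar>(\<lambda>_. 1::real) t\<bar>)"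
  define Z where "Z \<omega> = (\<Sum>v\<in>U. Xf p v (fst (fst \<omega>)) * Aw W (G1 v) (snd (fst \<omega>)) * Aw (\<lambda>_. 1) (G2 v) (snd \<omega>))"
    for \<omega>
  have est: "J_sum_est p e1 e2 J1 J2 W T1 T2 = (\<lambda>\<omega>. k * Z \<omega>)"
  proof
    fix \<omega> :: "(('u \<Rightarrow> real) \<times> ('i \<Rightarrow> bool)) \<times> ('k \<Rightarrow> bool)"
    show "J_sum_est p e1 e2 J1 J2 W T1 T2 \<omega> = k * Z \<omega>"
      unfolding J_sum_est_def Let_def Z_def k_def G1_def G2_def
      using join_rewrite[OF fU f1 f2 assms(4,5)] by simp
  qed
  have Xm: "v \<in> U \<Longrightarrow> Xf p v \<in> borel_measurable H" for v unfolding H_def by (rule Xf_meas)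
  have A1m: "Aw W (G1 v) \<in> borel_measurable C1" for v unfolding C1_def by (rule Aw_meas[OF G1s])
  have A2m: "Aw (\<lambda>_. 1) (G2 v) \<in> borel_measurable C2" for v unfolding C2_def by (rule Aw_meas[OF G2s])
  have A1b: "\<bar>Aw W (G1 v) c\<bar> \<le> SW" for v c unfolding SW_def by (rule Aw_bound[OF f1 G1s])
  have A2b: "\<bar>Aw (\<lambda>_. 1) (G2 v) c\<bar> \<le> S1" for v c unfolding S1_def by (rule Aw_bound[OF f2 G2s])
  have tri1: "integrable M (\<lambda>\<omega>. Xf p v (fst (fst \<omega>)) * Aw W (G1 v) (snd (fst \<omega>)) * Aw (\<lambda>_. 1) (G2 v) (snd \<omega>))"
    "(\<integral>\<omega>. Xf p v (fst (fst \<omega>)) * Aw W (G1 v) (snd (fst \<omega>)) * Aw (\<lambda>_. 1) (G2 v) (snd \<omega>) \<partial>M)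
      = integral\<^sup>L H (Xf p v) * integral\<^sup>L C1 (Aw W (G1 v)) * integral\<^sup>L C2 (Aw (\<lambda>_. 1) (G2 v))"
    if v: "v \<in> U" for v
    unfolding M_def
    by (rule triple_int[OF PH PC1 PC2 Xm[OF v] A1m A2m Xf_bound A1b A2b])+
  have mom1: "(\<integral>\<omega>. Xf p v (fst (fst \<omega>)) * Aw W (G1 v) (snd (fst \<omega>)) * Aw (\<lambda>_. 1) (G2 v) (snd \<omega>) \<partial>M)
      = p * q1 * s v * (q2 * b v)" if v: "v \<in> U" for v
    using tri1(2)[OF v] H0[OF fU v pb] Aw_int1[OF f1 G1s q1b] Aw_int1[OF f2 G2s q2b]
    by (simp add: H_def C1_def C2_def s_def b_def)
  define TT where "TT v v' \<omega> = (Xf p v (fst (fst \<omega>)) * Xf p v' (fst (fst \<omega>)))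
     * (Aw W (G1 v) (snd (fst \<omega>)) * Aw W (G1 v') (snd (fst \<omega>)))
     * (Aw (\<lambda>_. 1) (G2 v) (snd \<omega>) * Aw (\<lambda>_. 1) (G2 v') (snd \<omega>))" for v v' \<omega>
  have tri2: "integrable M (TT v v')"
    "integral\<^sup>L M (TT v v')
      = (\<integral>h. Xf p v h * Xf p v' h \<partial>H) * (\<integral>c. Aw W (G1 v) c * Aw W (G1 v') c \<partial>C1)
        * (\<integral>c. Aw (\<lambda>_. 1) (G2 v) c * Aw (\<lambda>_. 1) (G2 v') c \<partial>C2)"
    if v: "v \<in> U" and v': "v' \<in> U" for v v'
    unfolding M_def TT_def
    by (rule triple_int[OF PH PC1 PC2 borel_measurable_times[OF Xm[OF v] Xm[OF v']]
          borel_measurable_times[OF A1m A1m] borel_measurable_times[OF A2m A2m]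
          abs_mult_le[OF Xf_bound Xf_bound] abs_mult_le[OF A1b A1b] abs_mult_le[OF A2b A2b]])+
  define e where "e v = p * q1 * s v * (q2 * b v)" for v
  define D where "D v = p * (q1 * q1 * (s v * s v) + (q1 - q1 * q1) * m v) * (q2 * q2 * (b v * b v) + (q2 - q2 * q2) * b v)
     - (p * q1 * s v * (q2 * b v)) * (p * q1 * s v * (q2 * b v))" for v
  have G1i: "G1 v \<inter> G1 v' = (if v = v' then G1 v else {})" for v v' by (auto simp: G1_def)
  have G2i: "G2 v \<inter> G2 v' = (if v = v' then G2 v else {})" for v v' by (auto simp: G2_def)
  have mom2: "integral\<^sup>L M (TT v v') - e v * e v' = (if v = v' then D v else 0)"
    if v: "v \<in> U" and v': "v' \<in> U" for v v'
  proof -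
    have "integral\<^sup>L M (TT v v') = (if v = v' then p else p * p)
        * (q1 * q1 * s v * s v' + (q1 - q1 * q1) * (\<Sum>t\<in>G1 v \<inter> G1 v'. W t * W t))
        * (q2 * q2 * b v * b v' + (q2 - q2 * q2) * (\<Sum>t\<in>G2 v \<inter> G2 v'. 1 * 1))"
      using tri2(2)[OF v v'] H1[OF fU v v' pb] Aw_int2[OF f1 G1s G1s q1b] Aw_int2[OF f2 G2s G2s q2b]
      by (simp add: H_def C1_def C2_def s_def b_def)
    then show ?thesis
      by (cases "v = v'") (simp_all add: G1i G2i e_def D_def m_def b_def algebra_simps)
  qed
  have intZ: "integrable M Z"
    unfolding Z_def using tri1(1) by (auto intro!: integrable_sum)
  have Zsq: "(Z \<omega>)\<^sup>2 = (\<Sum>v\<in>U. \<Sum>v'\<in>U. TT v v' \<omega>)" for \<omega>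
    unfolding Z_def power2_eq_square sum_product TT_def
    by (intro sum.cong refl) (simp add: mult_ac)
  have intZ2: "integrable M (\<lambda>\<omega>. (Z \<omega>)\<^sup>2)"
    unfolding Zsq using tri2(1) by (auto intro!: integrable_sum)
  have EZ: "P.expectation Z = (\<Sum>v\<in>U. e v)"
    unfolding Z_def using tri1(1) mom1 by (simp add: integral_sum e_def)
  have EZ2: "P.expectation (\<lambda>\<omega>. (Z \<omega>)\<^sup>2) = (\<Sum>v\<in>U. \<Sum>v'\<in>U. integral\<^sup>L M (TT v v'))"
  proof -
    have "(\<lambda>\<omega>. (Z \<omega>)\<^sup>2) = (\<lambda>\<omega>. \<Sum>v\<in>U. \<Sum>v'\<in>U. TT v v' \<omega>)" using Zsq by auto
    then have "P.expectation (\<lambda>\<omega>. (Z \<omega>)\<^sup>2) = (\<Sum>v\<in>U. P.expectation (\<lambda>\<omega>. \<Sum>v'\<in>U. TT v v' \<omega>))"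
      using tri2(1) by (simp add: integral_sum integrable_sum del: power2_eq_square)
    also have "\<dots> = (\<Sum>v\<in>U. \<Sum>v'\<in>U. integral\<^sup>L M (TT v v'))"
      using tri2(1) by (intro sum.cong refl) (simp add: integral_sum)
    finally show ?thesis .
  qed
  have VZ: "P.expectation (\<lambda>\<omega>. (Z \<omega>)\<^sup>2) - (P.expectation Z)\<^sup>2 = (\<Sum>v\<in>U. D v)"
  proof -
    have "P.expectation (\<lambda>\<omega>. (Z \<omega>)\<^sup>2) - (P.expectation Z)\<^sup>2
        = (\<Sum>v\<in>U. \<Sum>v'\<in>U. integral\<^sup>L M (TT v v') - e v * e v')"
      unfolding EZ EZ2 unfolding power2_eq_square sum_product by (simp add: sum_subtractf)
    also have "\<dots> = (\<Sum>v\<in>U. \<Sum>v'\<in>U. if v = v' then D v else 0)"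
      by (intro sum.cong refl mom2)
    also have "\<dots> = (\<Sum>v\<in>U. D v)"
      using fU by simp
    finally show ?thesis .
  qed
  have Var: "P.variance (\<lambda>\<omega>. k * Z \<omega>) = k * k * (\<Sum>v\<in>U. D v)"
  proof -
    have i1: "integrable M (\<lambda>\<omega>. k * Z \<omega>)" using intZ by simp
    have i2: "integrable M (\<lambda>\<omega>. (k * Z \<omega>)\<^sup>2)" using intZ2 by (simp add: power_mult_distrib)
    have "P.variance (\<lambda>\<omega>. k * Z \<omega>) = P.expectation (\<lambda>\<omega>. (k * Z \<omega>)\<^sup>2) - (P.expectation (\<lambda>\<omega>. k * Z \<omega>))\<^sup>2"
      by (rule P.variance_eq[OF i1 i2])
    also have "\<dots> = k * k * (P.expectation (\<lambda>\<omega>. (Z \<omega>)\<^sup>2) - (P.expectation Z)\<^sup>2)"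
      by (simp add: power_mult_distrib power2_eq_square algebra_simps)
    finally show ?thesis using VZ by simp
  qed
  have betas:
    "beta1 U J1 J2 W T1 T2 = (\<Sum>v\<in>U. s v * s v * b v)"
    "beta2 U J1 J2 W T1 T2 = (\<Sum>v\<in>U. m v * (b v * b v))"
    "beta3 U J1 J2 W T1 T2 = (\<Sum>v\<in>U. m v * b v)"
    "beta4 U J1 J2 W T1 T2 = (\<Sum>v\<in>U. s v * s v * (b v * b v))"
    unfolding beta1_def beta2_def beta3_def beta4_def beta_terms[OF f1]
    by (simp_all add: s_def m_def b_def G1_def G2_def cnt_def power2_eq_square)
  have "k * k * (\<Sum>v\<in>U. D v) = (\<Sum>v\<in>U. (1 / e2 - 1 / p) * (s v * s v * b v) + (1 / e1 - 1 / p) * (m v * (b v * b v))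
      + (p / (e1 * e2) - 1 / e1 - 1 / e2 + 1 / p) * (m v * b v) + (1 / p - 1) * (s v * s v * (b v * b v)))"
    unfolding sum_distrib_left
    by (intro sum.cong refl) (unfold D_def k_def q1_def q2_def, rule alg[OF p0 assms(6) assms(8)])
  also have "\<dots> = (1 / e2 - 1 / p) * beta1 U J1 J2 W T1 T2
         + (1 / e1 - 1 / p) * beta2 U J1 J2 W T1 T2
         + (p / (e1 * e2) - 1 / e1 - 1 / e2 + 1 / p) * beta3 U J1 J2 W T1 T2
         + (1 / p - 1) * beta4 U J1 J2 W T1 T2"
    unfolding betas by (simp add: sum.distrib sum_distrib_left)
  finally show ?thesis using Var by (simp add: Meq est)
qed

end
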